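(* For every partition $\lambda$ with at most $n$ parts, $$V^*_\lambda=\mathrm{Span}_{\mathbb{Q}(q,t)}\{E^*_\mu:\mu\in S_n(\lambda)\},$$ where $S_n(\lambda)$ is the set of rearrangements of $\lambda$.
   Context: Polynomials are in $x_1,\dots,x_n$ over $\mathbb{Q}(q,t)$; $\mathcal{P}_n^{(d)}$ denotes polynomials of degree at most $d$. For $\mu\in\mathbb{N}^n$ let $k_i(\mu)=\#\{j<i:\mu_j>\mu_i\}+\#\{j>i:\mu_j\ge\mu_i\}$ and $\widetilde\mu=(q^{\mu_1}t^{-k_1(\mu)},\dots,q^{\mu_n}t^{-k_n(\mu)})$. For $\mu\in\mathbb{N}^n$ with $|\mu|=d$, $E^*_\mu$ is the unique polynomial in $\mathcal{P}_n^{(d)}$ whose coefficient of $x^\mu$ is $1$ and with $E^*_\mu(\widetilde\nu)=0$ for all $\nu\in\mathbb{N}^n$, $|\nu|\le d$, $\nu\ne\mu$. For a partition $\lambda$ of size $d$, $V^*_\lambda=\{f\in\mathcal{P}_n^{(d)}: f(\widetilde\nu)=0 \text{ for all } \nu\in\mathbb{N}^n \text{ with } |\nu|\le|\lambda| \text{ and } \nu\notin S_n(\lambda)\}$. *)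

theory Defs
  imports Main "HOL-Library.Function_Algebras" "HOL-Computational_Algebra.Polynomial" "HOL-Computational_Algebra.Fraction_Field"
begin

text \<open>The field Q(q,t) = fraction field of Q[t][q].\<close>
type_synonym K = "rat poly poly fract"

definition qq :: K where "qq = Fract [:0, 1:] 1"
definition tt :: K where "tt = Fract [:[:0, 1:]:] 1"

text \<open>Compositions (exponent vectors) of length n, polynomials in x_1..x_n as
coefficient functions on exponent vectors (lists of length n).\<close>
definition comps :: "nat \<Rightarrow> nat \<Rightarrow> nat list set" where
  "comps n d = {\<mu>. length \<mu> = n \<and> sum_list \<mu> \<le> d}"

definition polys :: "nat \<Rightarrow> nat \<Rightarrow> (nat list \<Rightarrow> K) set" where
  "polys n d = {f. \<forall>\<mu>. f \<mu> \<noteq> 0 \<longrightarrow> \<mu> \<in> comps n d}"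

definition peval :: "nat \<Rightarrow> nat \<Rightarrow> (nat list \<Rightarrow> K) \<Rightarrow> K list \<Rightarrow> K" where
  "peval n d f x = (\<Sum>\<mu>\<in>comps n d. f \<mu> * (\<Prod>i<n. (x ! i) ^ (\<mu> ! i)))"

text \<open>k_i(mu) (0-based index i) and the point tilde mu.\<close>
definition kk :: "nat \<Rightarrow> nat list \<Rightarrow> nat \<Rightarrow> nat" where
  "kk n \<mu> i = card {j. j < i \<and> \<mu> ! j > \<mu> ! i} + card {j. i < j \<and> j < n \<and> \<mu> ! j \<ge> \<mu> ! i}"

definition tilde :: "nat \<Rightarrow> nat list \<Rightarrow> K list" where
  "tilde n \<mu> = map (\<lambda>i. qq ^ (\<mu> ! i) * (inverse tt) ^ (kk n \<mu> i)) [0..<n]"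

definition Estar :: "nat \<Rightarrow> nat list \<Rightarrow> (nat list \<Rightarrow> K)" where
  "Estar n \<mu> = (THE f. f \<in> polys n (sum_list \<mu>) \<and> f \<mu> = 1 \<and>
      (\<forall>\<nu>. length \<nu> = n \<and> sum_list \<nu> \<le> sum_list \<mu> \<and> \<nu> \<noteq> \<mu>
            \<longrightarrow> peval n (sum_list \<mu>) f (tilde n \<nu>) = 0))"

text \<open>Partitions with at most n parts, padded by zeros to length n.\<close>
definition is_partition :: "nat \<Rightarrow> nat list \<Rightarrow> bool" where
  "is_partition n lam \<longleftrightarrow> length lam = n \<and> sorted (rev lam)"

definition rearr :: "nat list \<Rightarrow> nat list set" where
  "rearr lam = {\<mu>. mset \<mu> = mset lam}"

definition Vstar :: "nat \<Rightarrow> nat list \<Rightarrow> (nat list \<Rightarrow> K) set" where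
  "Vstar n lam = {f \<in> polys n (sum_list lam).
      \<forall>\<nu>. length \<nu> = n \<and> sum_list \<nu> \<le> sum_list lam \<and> \<nu> \<notin> rearr lam
            \<longrightarrow> peval n (sum_list lam) f (tilde n \<nu>) = 0}"

definition pscale :: "K \<Rightarrow> (nat list \<Rightarrow> K) \<Rightarrow> (nat list \<Rightarrow> K)" where
  "pscale c f = (\<lambda>\<mu>. c * f \<mu>)"

end

theory Submission
  imports Defs
begin

lemma weights_exist:
  fixes c :: "nat \<Rightarrow> 'a::field"
  assumes inj: "inj_on c {..m}"
  shows "\<exists>w. \<forall>k\<le>m. (\<Sum>a\<le>m. w a * c a ^ k) = (if k = m then 1 else 0)"
proof -
  define w where "w a = inverse (\<Prod>b\<in>{..m}-{a}. (c a - c b))" for a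
  define L where "L a = (\<Prod>b\<in>{..m}-{a}. [:- c b, 1:])" for a
  have nz: "(\<Prod>b\<in>{..m}-{a}. (c a - c b)) \<noteq> 0" if "a \<le> m" for a
    using inj that by (auto simp: inj_on_def)
  have degL: "degree (L a) = m" if "a \<le> m" for a
  proof -
    have "degree (L a) = (\<Sum>b\<in>{..m}-{a}. degree [:- c b, 1:])"
      unfolding L_def by (rule degree_prod_sum_eq) auto
    also have "\<dots> = card ({..m}-{a})" by simp
    also have "\<dots> = m" using that by simp
    finally show ?thesis .
  qed
  have lcL: "lead_coeff (L a) = 1" for a
    unfolding L_def lead_coeff_prod by simp
  have cL: "coeff (L a) m = 1" if "a \<le> m" for a
    using degL[OF that] lcL[of a] by simp
  have poly_L: "poly (L a) (c j) = (if j = a then (\<Prod>b\<in>{..m}-{a}. (c a - c b)) else 0)"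
    if "j \<le> m" "a \<le> m" for j a
  proof (cases "j = a")
    case True then show ?thesis unfolding L_def poly_prod by simp
  next
    case False
    then have "j \<in> {..m}-{a}" using that by auto
    then have "(\<Prod>b\<in>{..m}-{a}. poly [:- c b, 1:] (c j)) = 0"
      by (intro prod_zero) auto
    then show ?thesis using False unfolding L_def poly_prod by simp
  qed
  have main: "(\<Sum>a\<le>m. w a * c a ^ k) = (if k = m then 1 else 0)" if km: "k \<le> m" for k
  proof -
    define P where "P = (\<Sum>a\<le>m. smult (w a * c a ^ k) (L a))"
    have polyP: "poly P (c j) = c j ^ k" if "j \<le> m" for j
    proof -
      have "poly P (c j) = (\<Sum>a\<le>m. w a * c a ^ k * poly (L a) (c j))"
        unfolding P_def poly_sum by simp
      also have "\<dots> = (\<Sum>a\<le>m. if a = j then w j * c j ^ k * (\<Prod>b\<in>{..m}-{j}. (c j - c b)) else 0)"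
        using that poly_L by (intro sum.cong) auto
      also have "\<dots> = w j * c j ^ k * (\<Prod>b\<in>{..m}-{j}. (c j - c b))"
        using that by (simp add: sum.delta')
      also have "\<dots> = c j ^ k" using nz[OF that] by (simp add: w_def)
      finally show ?thesis .
    qed
    define Q where "Q = P - monom 1 k"
    have degP: "degree P \<le> m"
    proof -
      have "degree (smult (w a * c a ^ k) (L a)) \<le> m" if "a \<in> {..m}" for a
        using degree_smult_le[of "w a * c a ^ k" "L a"] degL[of a] that by simp
      then show ?thesis unfolding P_def by (intro degree_sum_le) auto
    qed
    have degQ: "degree Q \<le> m"
      unfolding Q_def using degP km
      by (meson degree_diff_le degree_monom_le order.trans)
    have roots: "c ` {..m} \<subseteq> {x. poly Q x = 0}"
      using polyP by (auto simp: Q_def poly_monom)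
    have "Q = 0"
    proof (rule ccontr)
      assume "Q \<noteq> 0"
      then have "card {x. poly Q x = 0} \<le> m" using card_poly_roots_bound[OF \<open>Q \<noteq> 0\<close>] degQ by linarith
      moreover have "card (c ` {..m}) \<le> card {x. poly Q x = 0}"
        using roots poly_roots_finite[OF \<open>Q \<noteq> 0\<close>] by (intro card_mono) auto
      moreover have "card (c ` {..m}) = Suc m" using inj by (simp add: card_image)
      ultimately show False by simp
    qed
    then have "coeff P m = coeff (monom 1 k) m" by (simp add: Q_def)
    also have "\<dots> = (if k = m then 1 else 0)" by simp
    finally have "coeff P m = (if k = m then 1 else 0)" .
    moreover have "coeff P m = (\<Sum>a\<le>m. w a * c a ^ k)"
      unfolding P_def coeff_sum by (simp add: cL)
    ultimately show ?thesis by simp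
  qed
  show ?thesis using main by blast
qed

definition box :: "nat list \<Rightarrow> nat list set" where
  "box \<mu> = {\<nu>. length \<nu> = length \<mu> \<and> (\<forall>i<length \<mu>. \<nu>!i \<le> \<mu>!i)}"

lemma box_Nil: "box [] = {[]}"
  by (auto simp: box_def)

lemma box_Cons: "box (m # \<mu>) = (\<lambda>(a,\<nu>). a # \<nu>) ` ({..m} \<times> box \<mu>)"
proof
  show "box (m # \<mu>) \<subseteq> (\<lambda>(a,\<nu>). a # \<nu>) ` ({..m} \<times> box \<mu>)"
  proof
    fix x assume x: "x \<in> box (m # \<mu>)"
    then obtain a \<nu> where xe: "x = a # \<nu>" by (cases x) (auto simp: box_def)
    have "a \<le> m" using x xe by (auto simp: box_def)
    moreover have "\<nu> \<in> box \<mu>" using x xe by (fastforce simp: box_def)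
    ultimately show "x \<in> (\<lambda>(a,\<nu>). a # \<nu>) ` ({..m} \<times> box \<mu>)" using xe by force
  qed
next
  show "(\<lambda>(a,\<nu>). a # \<nu>) ` ({..m} \<times> box \<mu>) \<subseteq> box (m # \<mu>)"
    by (auto simp: box_def nth_Cons split: nat.splits)
qed

lemma finite_box: "finite (box \<mu>)"
  by (induction \<mu>) (auto simp: box_Nil box_Cons)

lemma box_prod:
  fixes F :: "nat \<Rightarrow> nat \<Rightarrow> 'a::comm_semiring_1"
  shows "(\<Sum>\<nu>\<in>box \<mu>. \<Prod>i<length \<mu>. F i (\<nu>!i)) = (\<Prod>i<length \<mu>. \<Sum>a\<le>\<mu>!i. F i a)"
proof (induction \<mu> arbitrary: F)
  case Nil
  then show ?case by (simp add: box_Nil)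
next
  case (Cons m \<mu>)
  have inj: "inj_on (\<lambda>(a,\<nu>). a # \<nu>) ({..m} \<times> box \<mu>)"
    by (auto simp: inj_on_def)
  have "(\<Sum>\<nu>\<in>box (m#\<mu>). \<Prod>i<length (m#\<mu>). F i (\<nu>!i))
      = (\<Sum>(a,\<nu>)\<in>{..m} \<times> box \<mu>. \<Prod>i<Suc (length \<mu>). F i ((a#\<nu>)!i))"
    unfolding box_Cons by (subst sum.reindex[OF inj]) (simp add: case_prod_beta)
  also have "\<dots> = (\<Sum>(a,\<nu>)\<in>{..m} \<times> box \<mu>. F 0 a * (\<Prod>i<length \<mu>. F (Suc i) (\<nu>!i)))"
    by (intro sum.cong refl) (simp only: prod.lessThan_Suc_shift nth_Cons_0 nth_Cons_Suc split: prod.splits)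
  also have "\<dots> = (\<Sum>a\<le>m. \<Sum>\<nu>\<in>box \<mu>. F 0 a * (\<Prod>i<length \<mu>. F (Suc i) (\<nu>!i)))"
    by (rule sum.cartesian_product[symmetric])
  also have "\<dots> = (\<Sum>a\<le>m. F 0 a * (\<Sum>\<nu>\<in>box \<mu>. \<Prod>i<length \<mu>. F (Suc i) (\<nu>!i)))"
    by (intro sum.cong refl) (rule sum_distrib_left[symmetric])
  also have "\<dots> = (\<Sum>a\<le>m. F 0 a * (\<Prod>i<length \<mu>. \<Sum>b\<le>\<mu>!i. F (Suc i) b))"
    by (simp only: Cons.IH[of "\<lambda>i. F (Suc i)"])
  also have "\<dots> = (\<Sum>a\<le>m. F 0 a) * (\<Prod>i<length \<mu>. \<Sum>b\<le>\<mu>!i. F (Suc i) b)"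
    by (simp add: sum_distrib_right)
  also have "\<dots> = (\<Prod>i<length (m#\<mu>). \<Sum>a\<le>(m#\<mu>)!i. F i a)"
    by (simp only: length_Cons prod.lessThan_Suc_shift nth_Cons_0 nth_Cons_Suc)
  finally show ?case .
qed

lemma le_sum_eq:
  fixes \<kappa> \<mu> :: "nat list"
  assumes "length \<kappa> = length \<mu>" "\<forall>i<length \<mu>. \<mu>!i \<le> \<kappa>!i" "sum_list \<kappa> \<le> sum_list \<mu>"
  shows "\<kappa> = \<mu>"
proof (rule ccontr)
  assume ne: "\<kappa> \<noteq> \<mu>"
  then obtain j where j: "j < length \<mu>" "\<kappa>!j \<noteq> \<mu>!j"
    using assms(1) by (auto simp: list_eq_iff_nth_eq)
  have lt: "\<mu>!j < \<kappa>!j" using j assms(2) le_neq_trans by metis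
  have "(\<Sum>i<length \<mu>. \<mu>!i) < (\<Sum>i<length \<mu>. \<kappa>!i)"
    by (rule sum_strict_mono_ex1) (use j lt assms(2) in auto)
  then show False using assms(1,3) by (simp add: sum_list_sum_nth atLeast0LessThan)
qed

lemma box_sum_le: "\<nu> \<in> box \<mu> \<Longrightarrow> sum_list \<nu> \<le> sum_list \<mu>"
  unfolding box_def by (auto simp: sum_list_sum_nth atLeast0LessThan intro!: sum_mono)

lemma grid:
  fixes c :: "nat \<Rightarrow> 'a::field" and u :: "nat list \<Rightarrow> 'a"
  assumes inj: "inj c" and fin: "finite D" and len: "\<forall>\<nu>\<in>D. length \<nu> = n"
    and lower: "\<forall>\<mu>\<in>D. box \<mu> \<subseteq> D"
    and eq: "\<forall>\<nu>\<in>D. (\<Sum>\<kappa>\<in>D. u \<kappa> * (\<Prod>i<n. c (\<nu>!i) ^ (\<kappa>!i))) = 0"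
  shows "\<forall>\<kappa>\<in>D. u \<kappa> = 0"
proof (rule ccontr)
  assume "\<not> (\<forall>\<kappa>\<in>D. u \<kappa> = 0)"
  define S where "S = {\<kappa>\<in>D. u \<kappa> \<noteq> 0}"
  have finS: "finite S" and neS: "S \<noteq> {}"
    using fin \<open>\<not> (\<forall>\<kappa>\<in>D. u \<kappa> = 0)\<close> by (auto simp: S_def)
  obtain \<mu> where \<mu>S: "\<mu> \<in> S" and \<mu>max: "\<forall>\<kappa>\<in>S. sum_list \<kappa> \<le> sum_list \<mu>"
  proof -
    have "Max (sum_list ` S) \<in> sum_list ` S" using finS neS by simp
    then obtain \<mu> where "\<mu> \<in> S" "sum_list \<mu> = Max (sum_list ` S)" by auto
    moreover have "\<forall>\<kappa>\<in>S. sum_list \<kappa> \<le> Max (sum_list ` S)" using finS by simp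
    ultimately show ?thesis using that by metis
  qed
  have \<mu>D: "\<mu> \<in> D" and u\<mu>: "u \<mu> \<noteq> 0" using \<mu>S by (auto simp: S_def)
  have len\<mu>: "length \<mu> = n" using len \<mu>D by auto
  have "\<forall>m. \<exists>w. \<forall>k\<le>m. (\<Sum>a\<le>m. w a * c a ^ k) = (if k = m then 1 else 0)"
    using weights_exist inj by (metis inj_on_subset subset_UNIV)
  then obtain W where W: "\<And>m k. k \<le> m \<Longrightarrow> (\<Sum>a\<le>m. W m a * c a ^ k) = (if k = m then 1 else 0)"
    by metis
  define G where "G \<kappa> = (\<Prod>i<n. \<Sum>a\<le>\<mu>!i. W (\<mu>!i) a * c a ^ (\<kappa>!i))" for \<kappa>
  have 0: "0 = (\<Sum>\<nu>\<in>box \<mu>. (\<Prod>i<n. W (\<mu>!i) (\<nu>!i)) * (\<Sum>\<kappa>\<in>D. u \<kappa> * (\<Prod>i<n. c (\<nu>!i) ^ (\<kappa>!i))))"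
    using eq lower \<mu>D by (intro sum.neutral[symmetric]) auto
  also have "\<dots> = (\<Sum>\<kappa>\<in>D. u \<kappa> * (\<Sum>\<nu>\<in>box \<mu>. \<Prod>i<n. W (\<mu>!i) (\<nu>!i) * c (\<nu>!i) ^ (\<kappa>!i)))"
    by (simp add: sum_distrib_left sum_distrib_right prod.distrib mult_ac sum.swap[of _ "box \<mu>"])
  also have "\<dots> = (\<Sum>\<kappa>\<in>D. u \<kappa> * G \<kappa>)"
    unfolding G_def using box_prod[of "\<lambda>i a. W (\<mu>!i) a * c a ^ (\<kappa>!i)" \<mu> for \<kappa>] len\<mu>
    by simp
  also have "\<dots> = (\<Sum>\<kappa>\<in>D. if \<kappa> = \<mu> then u \<mu> else 0)"
  proof (intro sum.cong refl)
    fix \<kappa> assume \<kappa>D: "\<kappa> \<in> D"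
    show "u \<kappa> * G \<kappa> = (if \<kappa> = \<mu> then u \<mu> else 0)"
    proof (cases "\<kappa> = \<mu>")
      case True
      then have "G \<kappa> = 1" unfolding G_def using W by simp
      then show ?thesis using True by simp
    next
      case False
      show ?thesis
      proof (cases "u \<kappa> = 0")
        case True then show ?thesis using False by simp
      next
        case nz: False
        then have "\<kappa> \<in> S" using \<kappa>D by (simp add: S_def)
        then have "sum_list \<kappa> \<le> sum_list \<mu>" using \<mu>max by auto
        moreover have "length \<kappa> = length \<mu>" using len \<kappa>D \<mu>D by auto
        ultimately obtain i where i: "i < n" "\<kappa>!i < \<mu>!i"
          using le_sum_eq[of \<kappa> \<mu>] False len\<mu> by (meson not_le_imp_less)
        then have "(\<Sum>a\<le>\<mu>!i. W (\<mu>!i) a * c a ^ (\<kappa>!i)) = 0" using W[of "\<kappa>!i" "\<mu>!i"] by simp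
        then have "G \<kappa> = 0" unfolding G_def using i by (intro prod_zero) auto
        then show ?thesis using False by simp
      qed
    qed
  qed
  also have "\<dots> = u \<mu>" using \<mu>D fin by (simp add: sum.delta')
  finally show False using u\<mu> by simp
qed

definition fr :: "'a::idom \<Rightarrow> 'a fract" where "fr a = Fract a 1"

lemma fr_add: "fr (a + b) = fr a + fr b" by (simp add: fr_def)
lemma fr_mult: "fr (a * b) = fr a * fr b" by (simp add: fr_def)
lemma fr_0: "fr 0 = 0" by (simp add: fr_def Zero_fract_def)
lemma fr_1: "fr 1 = 1" by (simp add: fr_def One_fract_def)
lemma fr_eq_0: "fr a = 0 \<longleftrightarrow> a = 0" by (simp add: fr_def Zero_fract_def eq_fract)
lemma fr_sum: "fr (sum f A) = (\<Sum>x\<in>A. fr (f x))"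
  by (induction A rule: infinite_finite_induct) (auto simp: fr_0 fr_add)
lemma fr_power: "fr (a ^ k) = fr a ^ k"
  by (induction k) (auto simp: fr_1 fr_mult)

lemma clear_denoms:
  fixes v :: "'k \<Rightarrow> 'a::idom fract"
  assumes "finite D"
  shows "\<exists>e w. e \<noteq> 0 \<and> (\<forall>\<kappa>\<in>D. fr e * v \<kappa> = fr (w \<kappa>))"
  using assms
proof (induction D rule: finite_induct)
  case empty
  show ?case by (rule exI[of _ 1]) auto
next
  case (insert x D)
  then obtain e w where e: "e \<noteq> 0" and w: "\<forall>\<kappa>\<in>D. fr e * v \<kappa> = fr (w \<kappa>)" by blast
  obtain p q where vx: "v x = Fract p q" and q: "q \<noteq> 0" by (cases "v x") auto
  define w' where "w' \<kappa> = (if \<kappa> = x then e * p else q * w \<kappa>)" for \<kappa>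
  have "fr (e * q) * v \<kappa> = fr (w' \<kappa>)" if "\<kappa> \<in> insert x D" for \<kappa>
  proof (cases "\<kappa> = x")
    case True
    then show ?thesis using q by (simp add: vx fr_def w'_def eq_fract mult_ac)
  next
    case False
    then have "\<kappa> \<in> D" using that by auto
    then have "fr (e * q) * v \<kappa> = fr q * (fr e * v \<kappa>)" by (simp add: fr_mult mult_ac)
    also have "\<dots> = fr (w' \<kappa>)" using w \<open>\<kappa> \<in> D\<close> False by (simp add: w'_def fr_mult)
    finally show ?thesis .
  qed
  moreover have "e * q \<noteq> 0" using e q by simp
  ultimately show ?case by blast
qed

lemma normalize_spec:
  fixes w :: "'k \<Rightarrow> 'a::idom poly" and E :: "'r \<Rightarrow> 'k \<Rightarrow> 'a poly"
  assumes fin: "finite D" and nz: "\<exists>\<kappa>\<in>D. w \<kappa> \<noteq> 0"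
    and eq: "\<forall>\<nu>\<in>R. (\<Sum>\<kappa>\<in>D. w \<kappa> * E \<nu> \<kappa>) = 0"
  shows "\<exists>w'. (\<exists>\<kappa>\<in>D. poly (w' \<kappa>) a \<noteq> 0) \<and> (\<forall>\<nu>\<in>R. (\<Sum>\<kappa>\<in>D. w' \<kappa> * E \<nu> \<kappa>) = 0)"
  using nz eq
proof (induction "\<Sum>\<kappa>\<in>D. degree (w \<kappa>)" arbitrary: w rule: less_induct)
  case less
  show ?case
  proof (cases "\<exists>\<kappa>\<in>D. poly (w \<kappa>) a \<noteq> 0")
    case True
    then show ?thesis using less.prems by blast
  next
    case False
    then have "\<forall>\<kappa>\<in>D. \<exists>u. w \<kappa> = [:- a, 1:] * u"
      by (auto simp: poly_eq_0_iff_dvd dvd_def)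
    then obtain u where u: "\<forall>\<kappa>\<in>D. w \<kappa> = [:- a, 1:] * u \<kappa>" by metis
    have lin: "[:- a, 1:] \<noteq> (0 :: 'a poly)" by simp
    have equ: "\<forall>\<nu>\<in>R. (\<Sum>\<kappa>\<in>D. u \<kappa> * E \<nu> \<kappa>) = 0"
    proof
      fix \<nu> assume "\<nu> \<in> R"
      then have "0 = (\<Sum>\<kappa>\<in>D. w \<kappa> * E \<nu> \<kappa>)" using less.prems by simp
      also have "\<dots> = (\<Sum>\<kappa>\<in>D. [:- a, 1:] * (u \<kappa> * E \<nu> \<kappa>))"
        using u by (intro sum.cong refl) (metis mult.assoc)
      also have "\<dots> = [:- a, 1:] * (\<Sum>\<kappa>\<in>D. u \<kappa> * E \<nu> \<kappa>)"
        by (simp add: sum_distrib_left)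
      finally have "[:- a, 1:] * (\<Sum>\<kappa>\<in>D. u \<kappa> * E \<nu> \<kappa>) = 0" by simp
      then show "(\<Sum>\<kappa>\<in>D. u \<kappa> * E \<nu> \<kappa>) = 0" using lin by (simp only: mult_eq_0_iff) blast
    qed
    obtain \<kappa>0 where k0: "\<kappa>0 \<in> D" "w \<kappa>0 \<noteq> 0" using less.prems by blast
    have nzu: "\<exists>\<kappa>\<in>D. u \<kappa> \<noteq> 0" using k0 u by force
    have deg: "degree (w \<kappa>) = (if u \<kappa> = 0 then 0 else Suc (degree (u \<kappa>)))" if "\<kappa> \<in> D" for \<kappa>
    proof -
      have "degree (w \<kappa>) = degree ([:- a, 1:] * u \<kappa>)" using u that by simp
      also have "\<dots> = (if u \<kappa> = 0 then 0 else Suc (degree (u \<kappa>)))"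
      proof (cases "u \<kappa> = 0")
        case False
        then have "degree ([:- a, 1:] * u \<kappa>) = degree [:- a, 1:] + degree (u \<kappa>)"
          using lin degree_mult_eq by blast
        then show ?thesis using False by simp
      qed simp
      finally show ?thesis .
    qed
    have "(\<Sum>\<kappa>\<in>D. degree (u \<kappa>)) < (\<Sum>\<kappa>\<in>D. degree (w \<kappa>))"
    proof (rule sum_strict_mono_ex1[OF fin])
      show "\<forall>x\<in>D. degree (u x) \<le> degree (w x)" using deg by auto
      show "\<exists>x\<in>D. degree (u x) < degree (w x)" using deg k0 u by (intro bexI[of _ \<kappa>0]) auto
    qed
    from less.hyps[OF this nzu equ] show ?thesis .
  qed
qed

definition Mx :: "nat \<Rightarrow> nat list \<Rightarrow> nat list \<Rightarrow> K" where
  "Mx n \<nu> \<kappa> = (\<Prod>i<n. (tilde n \<nu> ! i) ^ (\<kappa>!i))"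

definition Qe :: "nat \<Rightarrow> nat list \<Rightarrow> nat list \<Rightarrow> nat" where
  "Qe n \<nu> \<kappa> = (\<Sum>i<n. \<nu>!i * \<kappa>!i)"

definition Te :: "nat \<Rightarrow> nat list \<Rightarrow> nat list \<Rightarrow> nat" where
  "Te n \<nu> \<kappa> = (\<Sum>i<n. kk n \<nu> i * \<kappa>!i)"

lemma Mx_eq: "Mx n \<nu> \<kappa> = qq ^ Qe n \<nu> \<kappa> * inverse tt ^ Te n \<nu> \<kappa>"
proof -
  have "Mx n \<nu> \<kappa> = (\<Prod>i<n. (qq ^ (\<nu>!i) * inverse tt ^ (kk n \<nu> i)) ^ (\<kappa>!i))"
    unfolding Mx_def tilde_def by (intro prod.cong refl) simp
  also have "\<dots> = (\<Prod>i<n. qq ^ (\<nu>!i * \<kappa>!i) * inverse tt ^ (kk n \<nu> i * \<kappa>!i))"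
    by (simp add: power_mult_distrib power_mult)
  also have "\<dots> = qq ^ Qe n \<nu> \<kappa> * inverse tt ^ Te n \<nu> \<kappa>"
    by (simp add: prod.distrib Qe_def Te_def power_sum)
  finally show ?thesis .
qed

lemma qq_fr: "qq = fr [:0, 1:]" by (simp add: qq_def fr_def)
lemma tt_fr: "tt = fr [:[:0, 1:]:]" by (simp add: tt_def fr_def)
lemma tt_nz: "tt \<noteq> 0" by (simp add: tt_fr fr_eq_0)

definition Ent :: "nat \<Rightarrow> nat \<Rightarrow> nat list \<Rightarrow> nat list \<Rightarrow> rat poly poly" where
  "Ent N n \<nu> \<kappa> = [: [:0, 1:] ^ (N - Te n \<nu> \<kappa>) :] * [:0, 1:] ^ Qe n \<nu> \<kappa>"

lemma tt_Mx: assumes "Te n \<nu> \<kappa> \<le> N"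
  shows "tt ^ N * Mx n \<nu> \<kappa> = fr (Ent N n \<nu> \<kappa>)"
proof -
  let ?T = "Te n \<nu> \<kappa>" and ?Q = "Qe n \<nu> \<kappa>"
  have 1: "tt ^ ?T * inverse tt ^ ?T = 1"
    using tt_nz by (simp add: power_mult_distrib[symmetric])
  have "tt ^ N = tt ^ (N - ?T) * tt ^ ?T"
    using assms by (simp add: power_add[symmetric])
  then have "tt ^ N * Mx n \<nu> \<kappa> = qq ^ ?Q * tt ^ (N - ?T) * (tt ^ ?T * inverse tt ^ ?T)"
    by (simp add: Mx_eq mult_ac)
  also have "\<dots> = qq ^ ?Q * tt ^ (N - ?T)" by (simp only: 1 mult_1_right)
  also have "\<dots> = fr ([:0, 1:] ^ ?Q * [: [:0, 1:] ^ (N - ?T) :])"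
    by (simp only: qq_fr tt_fr fr_mult fr_power poly_const_pow[symmetric])
  also have "\<dots> = fr (Ent N n \<nu> \<kappa>)" by (simp only: Ent_def mult.commute)
  finally show ?thesis .
qed

lemma spec_Ent: "poly (poly (Ent N n \<nu> \<kappa>) [:2:]) 1 = (\<Prod>i<n. ((2::rat) ^ (\<nu>!i)) ^ (\<kappa>!i))"
proof -
  have "poly (poly (Ent N n \<nu> \<kappa>) [:2:]) 1 = 2 ^ Qe n \<nu> \<kappa>" by (simp add: Ent_def)
  also have "\<dots> = (\<Prod>i<n. ((2::rat) ^ (\<nu>!i)) ^ (\<kappa>!i))" by (simp add: Qe_def power_sum power_mult)
  finally show ?thesis .
qed

lemma keyK:
  fixes v :: "nat list \<Rightarrow> K"
  assumes fin: "finite D" and len: "\<forall>\<nu>\<in>D. length \<nu> = n" and lower: "\<forall>\<mu>\<in>D. box \<mu> \<subseteq> D"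
    and eq: "\<forall>\<nu>\<in>D. (\<Sum>\<kappa>\<in>D. v \<kappa> * Mx n \<nu> \<kappa>) = 0"
  shows "\<forall>\<kappa>\<in>D. v \<kappa> = 0"
proof (rule ccontr)
  assume "\<not> (\<forall>\<kappa>\<in>D. v \<kappa> = 0)"
  then obtain \<kappa>0 where k0: "\<kappa>0 \<in> D" "v \<kappa>0 \<noteq> 0" by blast
  obtain e w where e: "e \<noteq> 0" and w: "\<forall>\<kappa>\<in>D. fr e * v \<kappa> = fr (w \<kappa>)"
    using clear_denoms[OF fin, of v] by blast
  define N where "N = (\<Sum>\<nu>\<in>D. \<Sum>\<kappa>\<in>D. Te n \<nu> \<kappa>)"
  have TN: "Te n \<nu> \<kappa> \<le> N" if "\<nu> \<in> D" "\<kappa> \<in> D" for \<nu> \<kappa>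
  proof -
    have "Te n \<nu> \<kappa> \<le> (\<Sum>\<kappa>\<in>D. Te n \<nu> \<kappa>)" using that fin by (intro member_le_sum) auto
    also have "\<dots> \<le> N" unfolding N_def using that fin by (intro member_le_sum) auto
    finally show ?thesis .
  qed
  have eqR: "\<forall>\<nu>\<in>D. (\<Sum>\<kappa>\<in>D. w \<kappa> * Ent N n \<nu> \<kappa>) = 0"
  proof
    fix \<nu> assume \<nu>: "\<nu> \<in> D"
    have "fr (\<Sum>\<kappa>\<in>D. w \<kappa> * Ent N n \<nu> \<kappa>) = (\<Sum>\<kappa>\<in>D. fr (w \<kappa>) * fr (Ent N n \<nu> \<kappa>))"
      by (simp add: fr_sum fr_mult)
    also have "\<dots> = (\<Sum>\<kappa>\<in>D. (fr e * tt ^ N) * (v \<kappa> * Mx n \<nu> \<kappa>))"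
      using w TN \<nu> by (intro sum.cong refl) (simp add: tt_Mx[symmetric] mult_ac)
    also have "\<dots> = (fr e * tt ^ N) * (\<Sum>\<kappa>\<in>D. v \<kappa> * Mx n \<nu> \<kappa>)"
      by (simp add: sum_distrib_left)
    also have "\<dots> = 0" using eq \<nu> by simp
    finally show "(\<Sum>\<kappa>\<in>D. w \<kappa> * Ent N n \<nu> \<kappa>) = 0" by (simp add: fr_eq_0)
  qed
  have wnz: "\<exists>\<kappa>\<in>D. w \<kappa> \<noteq> 0"
  proof
    have "fr (w \<kappa>0) \<noteq> 0" using w k0 e by (metis fr_eq_0 mult_eq_0_iff)
    then show "w \<kappa>0 \<noteq> 0" by (metis fr_0)
  qed (rule k0)
  obtain w1 where w1: "\<exists>\<kappa>\<in>D. poly (w1 \<kappa>) [:2:] \<noteq> 0"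
    and eq1: "\<forall>\<nu>\<in>D. (\<Sum>\<kappa>\<in>D. w1 \<kappa> * Ent N n \<nu> \<kappa>) = 0"
    using normalize_spec[OF fin wnz eqR, of "[:2:]"] by blast
  have eq1': "\<forall>\<nu>\<in>D. (\<Sum>\<kappa>\<in>D. poly (w1 \<kappa>) [:2:] * poly (Ent N n \<nu> \<kappa>) [:2:]) = 0"
  proof
    fix \<nu> assume "\<nu> \<in> D"
    then have "poly (\<Sum>\<kappa>\<in>D. w1 \<kappa> * Ent N n \<nu> \<kappa>) [:2:] = 0" using eq1 by simp
    then show "(\<Sum>\<kappa>\<in>D. poly (w1 \<kappa>) [:2:] * poly (Ent N n \<nu> \<kappa>) [:2:]) = 0"
      by (simp add: poly_sum)
  qed
  obtain w2 where w2: "\<exists>\<kappa>\<in>D. poly (w2 \<kappa>) 1 \<noteq> 0"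
    and eq2: "\<forall>\<nu>\<in>D. (\<Sum>\<kappa>\<in>D. w2 \<kappa> * poly (Ent N n \<nu> \<kappa>) [:2:]) = 0"
    using normalize_spec[OF fin w1 eq1', of 1] by blast
  have eq2': "\<forall>\<nu>\<in>D. (\<Sum>\<kappa>\<in>D. poly (w2 \<kappa>) 1 * (\<Prod>i<n. ((2::rat) ^ (\<nu>!i)) ^ (\<kappa>!i))) = 0"
  proof
    fix \<nu> assume "\<nu> \<in> D"
    then have "poly (\<Sum>\<kappa>\<in>D. w2 \<kappa> * poly (Ent N n \<nu> \<kappa>) [:2:]) 1 = 0" using eq2 by simp
    then show "(\<Sum>\<kappa>\<in>D. poly (w2 \<kappa>) 1 * (\<Prod>i<n. ((2::rat) ^ (\<nu>!i)) ^ (\<kappa>!i))) = 0"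
      by (simp add: poly_sum spec_Ent del: poly_power)
  qed
  have inj2: "inj (\<lambda>a::nat. (2::rat) ^ a)" by (auto simp: inj_on_def)
  have "\<forall>\<kappa>\<in>D. poly (w2 \<kappa>) 1 = 0"
    using grid[OF inj2 fin len lower, of "\<lambda>\<kappa>. poly (w2 \<kappa>) 1"] eq2' by blast
  then show False using w2 by blast
qed

lemma vs_pscale: "vector_space pscale"
  by unfold_locales (auto simp: pscale_def fun_eq_iff algebra_simps)

interpretation PS: vector_space pscale by (rule vs_pscale)

lemma sum_fun_app: "(\<Sum>a\<in>A. h a) x = (\<Sum>a\<in>A. h a x)"
  for h :: "'i \<Rightarrow> 'k \<Rightarrow> 'b::comm_monoid_add"
  by (induction A rule: infinite_finite_induct) auto

definition UC :: "nat list set \<Rightarrow> (nat list \<Rightarrow> K) set" where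
  "UC C = {f. \<forall>\<mu>. \<mu> \<notin> C \<longrightarrow> f \<mu> = 0}"

lemma subspace_UC: "PS.subspace (UC C)"
  by (auto simp: PS.subspace_def UC_def pscale_def)

lemma surj_lemma:
  fixes \<Phi> :: "(nat list \<Rightarrow> K) \<Rightarrow> (nat list \<Rightarrow> K)"
  assumes fin: "finite C" and hom: "module_hom pscale pscale \<Phi>"
    and maps: "\<forall>f\<in>UC C. \<Phi> f \<in> UC C" and inj0: "\<forall>f\<in>UC C. \<Phi> f = 0 \<longrightarrow> f = 0"
  shows "UC C \<subseteq> \<Phi> ` UC C"
proof -
  define \<delta> where "\<delta> \<mu> = (\<lambda>x::nat list. if x = \<mu> then (1::K) else 0)" for \<mu> :: "nat list"
  define E where "E = \<delta> ` C"
  have injd: "inj \<delta>" by (auto simp: inj_def \<delta>_def fun_eq_iff split: if_splits)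
  have EU: "E \<subseteq> UC C" by (auto simp: E_def UC_def \<delta>_def)
  have spanE: "PS.span E = UC C"
  proof (rule PS.span_subspace[OF EU _ subspace_UC])
    show "UC C \<subseteq> PS.span E"
    proof
      fix f assume f: "f \<in> UC C"
      have "f = (\<Sum>\<mu>\<in>C. pscale (f \<mu>) (\<delta> \<mu>))"
      proof
        fix x
        have "(\<Sum>\<mu>\<in>C. pscale (f \<mu>) (\<delta> \<mu>)) x = (\<Sum>\<mu>\<in>C. if x = \<mu> then f \<mu> else 0)"
          by (auto simp: sum_fun_app pscale_def \<delta>_def intro!: sum.cong)
        also have "\<dots> = f x" using f fin by (auto simp: UC_def)
        finally show "f x = (\<Sum>\<mu>\<in>C. pscale (f \<mu>) (\<delta> \<mu>)) x" by simp
      qed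
      also have "\<dots> \<in> PS.span E"
        by (intro PS.span_sum PS.span_scale PS.span_base) (auto simp: E_def)
      finally show "f \<in> PS.span E" .
    qed
  qed
  have indE: "PS.independent E"
    unfolding PS.dependent_explicit
  proof clarify
    fix T u v assume T: "finite T" "T \<subseteq> E" and s: "(\<Sum>v\<in>T. pscale (u v) v) = 0"
      and v: "v \<in> T" and uv: "u v \<noteq> 0"
    obtain \<mu> where \<mu>: "v = \<delta> \<mu>" using v T by (auto simp: E_def)
    have "0 = (\<Sum>w\<in>T. pscale (u w) w) \<mu>" using s by simp
    also have "\<dots> = (\<Sum>w\<in>T. if w = v then u v else 0)"
    proof (unfold sum_fun_app, intro sum.cong refl)
      fix w assume w: "w \<in> T"
      then obtain \<mu>' where \<mu>': "w = \<delta> \<mu>'" using T by (auto simp: E_def)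
      show "pscale (u w) w \<mu> = (if w = v then u v else 0)"
      proof (cases "w = v")
        case True then show ?thesis using \<mu> by (simp add: pscale_def \<delta>_def)
      next
        case False then have "\<mu>' \<noteq> \<mu>" using \<mu> \<mu>' by auto
        then show ?thesis using False \<mu>' by (simp add: pscale_def \<delta>_def)
      qed
    qed
    also have "\<dots> = u v" using v T by (simp add: sum.delta')
    finally show False using uv by simp
  qed
  have injPhi: "inj_on \<Phi> (PS.span E)"
    unfolding spanE using inj0 module_hom.inj_on_iff_eq_0[OF hom subspace_UC] by blast
  define B where "B = \<Phi> ` E"
  have finE: "finite E" using fin by (simp add: E_def)
  have indB: "PS.independent B"
    unfolding B_def by (rule module_hom.independent_injective_image[OF hom indE injPhi])
  have cardB: "card B = card E"
    unfolding B_def using injPhi PS.span_superset by (intro card_image inj_on_subset[OF injPhi]) auto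
  have finB: "finite B" using finE by (simp add: B_def)
  have BU: "B \<subseteq> PS.span E" using maps EU spanE by (auto simp: B_def)
  have "E \<subseteq> PS.span B"
  proof
    fix e assume e: "e \<in> E"
    show "e \<in> PS.span B"
    proof (rule ccontr)
      assume ne: "e \<notin> PS.span B"
      have ind: "PS.independent (insert e B)" using PS.independent_insertI[OF ne indB] .
      have sub: "insert e B \<subseteq> PS.span E" using BU e PS.span_superset by auto
      have "card (insert e B) \<le> card E" using PS.independent_span_bound[OF finE ind sub] by simp
      moreover have "e \<notin> B" using ne PS.span_superset by auto
      ultimately show False using cardB finB by simp
    qed
  qed
  then have "PS.span E \<subseteq> PS.span B" using PS.span_minimal PS.subspace_span by blast
  also have "PS.span B = \<Phi> ` PS.span E" unfolding B_def by (rule module_hom.span_image[OF hom])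
  finally show ?thesis using spanE by simp
qed

lemma peval_add: "peval n d (f + g) x = peval n d f x + peval n d g x"
  by (simp add: peval_def sum.distrib distrib_right)
lemma peval_scale: "peval n d (pscale c f) x = c * peval n d f x"
  by (simp add: peval_def pscale_def sum_distrib_left mult.assoc)
lemma peval_zero: "peval n d 0 x = 0"
  by (simp add: peval_def)
lemma peval_diff: "peval n d (f - g) x = peval n d f x - peval n d g x"
  by (simp add: peval_def sum_subtractf left_diff_distrib)
lemma peval_sum: "peval n d (\<Sum>a\<in>A. h a) x = (\<Sum>a\<in>A. peval n d (h a) x)"
proof (induction A rule: infinite_finite_induct)
  case (infinite A)
  then have "sum h A = 0" "(\<Sum>a\<in>A. peval n d (h a) x) = 0" by simp_all
  then show ?case by (simp only: peval_zero)
next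
  case empty
  then show ?case by (simp only: sum.empty peval_zero)
next
  case (insert a A)
  have "peval n d (sum h (insert a A)) x = peval n d (h a) x + peval n d (sum h A) x"
    by (simp only: sum.insert[OF insert(1,2)] peval_add)
  also have "\<dots> = (\<Sum>a\<in>insert a A. peval n d (h a) x)"
    by (simp only: sum.insert[OF insert(1,2)] insert.IH)
  finally show ?case .
qed

lemma polys_UC: "polys n d = UC (comps n d)"
  by (auto simp: polys_def UC_def)

lemma finite_comps: "finite (comps n d)"
proof (rule finite_subset)
  show "comps n d \<subseteq> {xs. set xs \<subseteq> {..d} \<and> length xs = n}"
    by (auto simp: comps_def dest: member_le_sum_list)
qed (rule finite_lists_length_eq, simp)

lemma peval_Mx: "peval n d f (tilde n \<nu>) = (\<Sum>\<kappa>\<in>comps n d. f \<kappa> * Mx n \<nu> \<kappa>)"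
  by (simp add: peval_def Mx_def)

lemma lower_comps: "\<forall>\<mu>\<in>comps n d. box \<mu> \<subseteq> comps n d"
proof (intro ballI subsetI)
  fix \<mu> \<nu> assume \<mu>: "\<mu> \<in> comps n d" and \<nu>: "\<nu> \<in> box \<mu>"
  have "length \<nu> = n" using \<mu> \<nu> by (simp add: box_def comps_def)
  moreover have "sum_list \<nu> \<le> d" using box_sum_le[OF \<nu>] \<mu> by (simp add: comps_def)
  ultimately show "\<nu> \<in> comps n d" by (simp add: comps_def)
qed

lemma K1:
  assumes f: "f \<in> polys n d" and z: "\<forall>\<nu>\<in>comps n d. peval n d f (tilde n \<nu>) = 0"
  shows "f = 0"
proof
  fix \<kappa>
  have "\<forall>\<kappa>\<in>comps n d. f \<kappa> = 0"
  proof -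
    have len: "\<forall>\<nu>\<in>comps n d. length \<nu> = n" by (simp add: comps_def)
    have eq: "\<forall>\<nu>\<in>comps n d. (\<Sum>\<kappa>\<in>comps n d. f \<kappa> * Mx n \<nu> \<kappa>) = 0"
      using z by (simp add: peval_Mx)
    show ?thesis by (rule keyK[OF finite_comps len lower_comps eq])
  qed
  then show "f \<kappa> = 0 \<kappa>" using f by (auto simp: polys_def)
qed

lemma K2:
  assumes \<mu>0: "\<mu>0 \<in> comps n d" "sum_list \<mu>0 = d" and f: "f \<in> polys n d" "f \<mu>0 = 0"
    and z: "\<forall>\<nu>\<in>comps n d - {\<mu>0}. peval n d f (tilde n \<nu>) = 0"
  shows "f = 0"
proof -
  define D where "D = comps n d - {\<mu>0}"
  have finD: "finite D" using finite_comps by (simp add: D_def)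
  have lenD: "\<forall>\<nu>\<in>D. length \<nu> = n" by (simp add: D_def comps_def)
  have lowD: "\<forall>\<mu>\<in>D. box \<mu> \<subseteq> D"
  proof (intro ballI subsetI)
    fix \<mu> \<nu> assume \<mu>: "\<mu> \<in> D" and \<nu>: "\<nu> \<in> box \<mu>"
    have "\<nu> \<in> comps n d" using lower_comps \<mu> \<nu> by (auto simp: D_def)
    moreover have "\<nu> \<noteq> \<mu>0"
    proof
      assume "\<nu> = \<mu>0"
      then have b: "\<mu>0 \<in> box \<mu>" using \<nu> by simp
      have "\<mu> = \<mu>0"
      proof (rule le_sum_eq)
        show "length \<mu> = length \<mu>0" using b by (simp add: box_def)
        show "\<forall>i<length \<mu>0. \<mu>0 ! i \<le> \<mu> ! i" using b by (simp add: box_def)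
        show "sum_list \<mu> \<le> sum_list \<mu>0" using \<mu> \<mu>0 by (simp add: D_def comps_def)
      qed
      then show False using \<mu> by (simp add: D_def)
    qed
    ultimately show "\<nu> \<in> D" by (simp add: D_def)
  qed
  have eqD: "\<forall>\<nu>\<in>D. (\<Sum>\<kappa>\<in>D. f \<kappa> * Mx n \<nu> \<kappa>) = 0"
  proof
    fix \<nu> assume \<nu>: "\<nu> \<in> D"
    have "(\<Sum>\<kappa>\<in>comps n d. f \<kappa> * Mx n \<nu> \<kappa>) = f \<mu>0 * Mx n \<nu> \<mu>0 + (\<Sum>\<kappa>\<in>D. f \<kappa> * Mx n \<nu> \<kappa>)"
      unfolding D_def by (rule sum.remove[OF finite_comps \<mu>0(1)])
    then show "(\<Sum>\<kappa>\<in>D. f \<kappa> * Mx n \<nu> \<kappa>) = 0"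
      using z \<nu> f(2) by (simp add: D_def peval_Mx)
  qed
  have "\<forall>\<kappa>\<in>D. f \<kappa> = 0" by (rule keyK[OF finD lenD lowD eqD])
  show "f = 0"
  proof
    fix \<kappa> show "f \<kappa> = 0 \<kappa>"
    proof (cases "\<kappa> \<in> D")
      case True
      then show ?thesis using \<open>\<forall>\<kappa>\<in>D. f \<kappa> = 0\<close> by simp
    next
      case False
      then have "\<kappa> = \<mu>0 \<or> \<kappa> \<notin> comps n d" by (auto simp: D_def)
      then show ?thesis using f unfolding polys_def by auto
    qed
  qed
qed

lemma Estar_props:
  assumes len: "length \<mu> = n"
  defines "d \<equiv> sum_list \<mu>"
  shows "Estar n \<mu> \<in> polys n d \<and> Estar n \<mu> \<mu> = 1
    \<and> (\<forall>\<nu>\<in>comps n d. \<nu> \<noteq> \<mu> \<longrightarrow> peval n d (Estar n \<mu>) (tilde n \<nu>) = 0)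
    \<and> peval n d (Estar n \<mu>) (tilde n \<mu>) \<noteq> 0"
proof -
  define C where "C = comps n d"
  have \<mu>C: "\<mu> \<in> C" using len by (simp add: C_def comps_def d_def)
  define \<Phi> where "\<Phi> f = (\<lambda>\<nu>. if \<nu> \<in> C then peval n d f (tilde n \<nu>) else 0)" for f
  have modp: "module pscale" using vs_pscale by (simp add: module_iff_vector_space)
  have hom: "module_hom pscale pscale \<Phi>"
  proof -
    have "\<Phi> (b1 + b2) = \<Phi> b1 + \<Phi> b2" for b1 b2
      unfolding \<Phi>_def peval_add by auto
    moreover have "\<Phi> (pscale r b) = pscale r (\<Phi> b)" for r b
      unfolding \<Phi>_def peval_scale by (auto simp: pscale_def)
    ultimately show ?thesis unfolding module_hom_def module_hom_axioms_def using modp by blast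
  qed
  have maps: "\<forall>f\<in>UC C. \<Phi> f \<in> UC C" by (auto simp: UC_def \<Phi>_def)
  have inj0: "\<forall>f\<in>UC C. \<Phi> f = 0 \<longrightarrow> f = 0"
  proof (intro ballI impI)
    fix f assume f: "f \<in> UC C" and "\<Phi> f = 0"
    then have "\<forall>\<nu>\<in>C. peval n d f (tilde n \<nu>) = 0" by (auto simp: \<Phi>_def fun_eq_iff split: if_splits)
    moreover have "f \<in> polys n d" using f by (simp add: C_def polys_UC)
    ultimately show "f = 0" using K1[of f n d] unfolding C_def by blast
  qed
  have surj: "UC C \<subseteq> \<Phi> ` UC C"
    by (rule surj_lemma[OF _ hom maps inj0]) (simp add: C_def finite_comps)
  define \<delta> where "\<delta> = (\<lambda>\<nu>. if \<nu> = \<mu> then (1::K) else 0)"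
  have "\<delta> \<in> UC C" using \<mu>C by (auto simp: UC_def \<delta>_def)
  then obtain g where g: "g \<in> UC C" "\<Phi> g = \<delta>" using surj by blast
  have gpol: "g \<in> polys n d" using g by (simp add: polys_UC C_def)
  have gev: "peval n d g (tilde n \<nu>) = (if \<nu> = \<mu> then 1 else 0)" if "\<nu> \<in> C" for \<nu>
  proof -
    have "\<Phi> g \<nu> = \<delta> \<nu>" using g(2) by simp
    then show ?thesis using that by (simp add: \<Phi>_def \<delta>_def)
  qed
  have g\<mu>: "g \<mu> \<noteq> 0"
  proof
    assume "g \<mu> = 0"
    moreover have "\<forall>\<nu>\<in>comps n d - {\<mu>}. peval n d g (tilde n \<nu>) = 0"
      using gev by (simp add: C_def)
    moreover have "\<mu> \<in> comps n d" "sum_list \<mu> = d" using \<mu>C by (simp_all add: C_def d_def)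
    ultimately have "g = 0" using K2[of \<mu> n d g] gpol by blast
    then show False using gev[OF \<mu>C] by (simp add: peval_zero)
  qed
  define P where "P f \<longleftrightarrow> f \<in> polys n (sum_list \<mu>) \<and> f \<mu> = 1 \<and>
      (\<forall>\<nu>. length \<nu> = n \<and> sum_list \<nu> \<le> sum_list \<mu> \<and> \<nu> \<noteq> \<mu>
            \<longrightarrow> peval n (sum_list \<mu>) f (tilde n \<nu>) = 0)" for f
  have Pc: "P f \<longleftrightarrow> f \<in> polys n d \<and> f \<mu> = 1 \<and> (\<forall>\<nu>\<in>C. \<nu> \<noteq> \<mu> \<longrightarrow> peval n d f (tilde n \<nu>) = 0)" for f
    by (auto simp: P_def C_def comps_def d_def)
  have subP: "PS.subspace (polys n d)" by (simp add: polys_UC subspace_UC)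
  have ex: "\<exists>!f. P f"
  proof
    show "P (pscale (inverse (g \<mu>)) g)"
      unfolding Pc peval_scale using g\<mu> gpol gev
      by (auto simp: pscale_def polys_def)
  next
    fix f assume Pf: "P f"
    show "f = pscale (inverse (g \<mu>)) g"
    proof -
      let ?h = "f - pscale (inverse (g \<mu>)) g"
      have Ph: "P (pscale (inverse (g \<mu>)) g)"
        unfolding Pc peval_scale using g\<mu> gpol gev
        by (auto simp: pscale_def polys_def)
      have fpol: "f \<in> polys n d" using Pf unfolding Pc by blast
      have hpol: "pscale (inverse (g \<mu>)) g \<in> polys n d" using Ph unfolding Pc by blast
      have "?h \<in> polys n d" using PS.subspace_diff[OF subP fpol hpol] .
      moreover have "?h \<mu> = 0" using Pf Ph by (simp add: Pc)
      moreover have "\<forall>\<nu>\<in>comps n d - {\<mu>}. peval n d ?h (tilde n \<nu>) = 0"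
        using Pf Ph by (auto simp: Pc peval_diff C_def)
      moreover have "\<mu> \<in> comps n d" "sum_list \<mu> = d" using \<mu>C by (simp_all add: C_def d_def)
      ultimately have "?h = 0" using K2[of \<mu> n d ?h] by blast
      then show ?thesis by simp
    qed
  qed
  have PE: "P (Estar n \<mu>)"
    unfolding Estar_def using theI'[OF ex] by (simp add: P_def)
  have nz: "peval n d (Estar n \<mu>) (tilde n \<mu>) \<noteq> 0"
  proof
    assume "peval n d (Estar n \<mu>) (tilde n \<mu>) = 0"
    then have "\<forall>\<nu>\<in>comps n d. peval n d (Estar n \<mu>) (tilde n \<nu>) = 0" using PE by (auto simp: Pc C_def)
    moreover have "Estar n \<mu> \<in> polys n d" using PE unfolding Pc by blast
    ultimately have "Estar n \<mu> = 0" using K1[of "Estar n \<mu>" n d] by blast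
    then show False using PE by (simp add: Pc)
  qed
  show ?thesis using PE nz by (simp add: Pc C_def)
qed

lemma subspace_Vstar: "PS.subspace (Vstar n lam)"
  unfolding PS.subspace_def Vstar_def
proof (intro conjI ballI allI)
  show "0 \<in> {f \<in> polys n (sum_list lam). \<forall>\<nu>. length \<nu> = n \<and> sum_list \<nu> \<le> sum_list lam \<and> \<nu> \<notin> rearr lam
            \<longrightarrow> peval n (sum_list lam) f (tilde n \<nu>) = 0}"
    by (simp add: polys_def peval_zero)
next
  fix x y assume x: "x \<in> {f \<in> polys n (sum_list lam). \<forall>\<nu>. length \<nu> = n \<and> sum_list \<nu> \<le> sum_list lam \<and> \<nu> \<notin> rearr lam
            \<longrightarrow> peval n (sum_list lam) f (tilde n \<nu>) = 0}"
    and y: "y \<in> {f \<in> polys n (sum_list lam). \<forall>\<nu>. length \<nu> = n \<and> sum_list \<nu> \<le> sum_list lam \<and> \<nu> \<notin> rearr lam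
            \<longrightarrow> peval n (sum_list lam) f (tilde n \<nu>) = 0}"
  have "x + y \<in> polys n (sum_list lam)"
    using x y PS.subspace_add[OF subspace_UC] by (simp add: polys_UC)
  then show "x + y \<in> {f \<in> polys n (sum_list lam). \<forall>\<nu>. length \<nu> = n \<and> sum_list \<nu> \<le> sum_list lam \<and> \<nu> \<notin> rearr lam
            \<longrightarrow> peval n (sum_list lam) f (tilde n \<nu>) = 0}"
    using x y by (simp add: peval_add)
next
  fix c x assume x: "x \<in> {f \<in> polys n (sum_list lam). \<forall>\<nu>. length \<nu> = n \<and> sum_list \<nu> \<le> sum_list lam \<and> \<nu> \<notin> rearr lam
            \<longrightarrow> peval n (sum_list lam) f (tilde n \<nu>) = 0}"
  have "pscale c x \<in> polys n (sum_list lam)"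
    using x PS.subspace_scale[OF subspace_UC] by (simp add: polys_UC)
  then show "pscale c x \<in> {f \<in> polys n (sum_list lam). \<forall>\<nu>. length \<nu> = n \<and> sum_list \<nu> \<le> sum_list lam \<and> \<nu> \<notin> rearr lam
            \<longrightarrow> peval n (sum_list lam) f (tilde n \<nu>) = 0}"
    using x by (simp add: peval_scale)
qed

theorem lemma2p5:
  fixes n :: nat and lam :: "nat list"
  assumes "is_partition n lam"
  shows "Vstar n lam = module.span pscale (Estar n ` rearr lam)"
proof -
  define d where "d = sum_list lam"
  define C where "C = comps n d"
  define R where "R = rearr lam"
  have lenlam: "length lam = n" using assms by (simp add: is_partition_def)
  have Rp: "length \<mu> = n \<and> sum_list \<mu> = d" if "\<mu> \<in> R" for \<mu>
  proof -
    have m: "mset \<mu> = mset lam" using that by (simp add: R_def rearr_def)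
    then have "length \<mu> = length lam" by (metis size_mset)
    moreover have "sum_list \<mu> = sum_list lam" using m by (metis sum_mset_sum_list)
    ultimately show ?thesis using lenlam by (simp add: d_def)
  qed
  have RC: "R \<subseteq> C" using Rp by (auto simp: C_def comps_def)
  have finR: "finite R" using RC finite_comps by (metis C_def finite_subset)
  have EP: "Estar n \<mu> \<in> polys n d \<and> Estar n \<mu> \<mu> = 1
    \<and> (\<forall>\<nu>\<in>C. \<nu> \<noteq> \<mu> \<longrightarrow> peval n d (Estar n \<mu>) (tilde n \<nu>) = 0)
    \<and> peval n d (Estar n \<mu>) (tilde n \<mu>) \<noteq> 0" if "\<mu> \<in> R" for \<mu>
    using Estar_props[of \<mu> n] Rp[OF that] by (simp add: C_def)
  have VR: "Vstar n lam = {f \<in> polys n d. \<forall>\<nu>\<in>C. \<nu> \<notin> R \<longrightarrow> peval n d f (tilde n \<nu>) = 0}"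
    by (auto simp: Vstar_def d_def C_def comps_def R_def)
  show ?thesis
  proof
    show "PS.span (Estar n ` rearr lam) \<subseteq> Vstar n lam"
    proof (rule PS.span_minimal[OF _ subspace_Vstar])
      show "Estar n ` rearr lam \<subseteq> Vstar n lam"
      proof
        fix e assume "e \<in> Estar n ` rearr lam"
        then obtain \<mu> where \<mu>: "\<mu> \<in> R" "e = Estar n \<mu>" by (auto simp: R_def)
        show "e \<in> Vstar n lam" unfolding VR using EP[OF \<mu>(1)] \<mu> by auto
      qed
    qed
  next
    show "Vstar n lam \<subseteq> PS.span (Estar n ` rearr lam)"
    proof
      fix f assume fV: "f \<in> Vstar n lam"
      then have fpol: "f \<in> polys n d" and fz: "\<forall>\<nu>\<in>C. \<nu> \<notin> R \<longrightarrow> peval n d f (tilde n \<nu>) = 0"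
        unfolding VR by auto
      define a where "a \<mu> = peval n d f (tilde n \<mu>) / peval n d (Estar n \<mu>) (tilde n \<mu>)" for \<mu>
      define s where "s = (\<Sum>\<mu>\<in>R. pscale (a \<mu>) (Estar n \<mu>))"
      have spol: "s \<in> polys n d"
        unfolding s_def polys_UC
        by (intro PS.subspace_sum[OF subspace_UC] PS.subspace_scale[OF subspace_UC])
           (use EP in \<open>auto simp: polys_UC\<close>)
      have gpol: "f - s \<in> polys n d"
        using PS.subspace_diff[OF subspace_UC] fpol spol by (simp add: polys_UC)
      have sev: "peval n d s (tilde n \<nu>) = (if \<nu> \<in> R then peval n d f (tilde n \<nu>) else 0)"
        if \<nu>: "\<nu> \<in> C" for \<nu>
      proof -
        have "peval n d s (tilde n \<nu>) = (\<Sum>\<mu>\<in>R. a \<mu> * peval n d (Estar n \<mu>) (tilde n \<nu>))"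
          unfolding s_def peval_sum peval_scale ..
        also have "\<dots> = (\<Sum>\<mu>\<in>R. if \<mu> = \<nu> then peval n d f (tilde n \<nu>) else 0)"
        proof (intro sum.cong refl)
          fix \<mu> assume \<mu>: "\<mu> \<in> R"
          show "a \<mu> * peval n d (Estar n \<mu>) (tilde n \<nu>) = (if \<mu> = \<nu> then peval n d f (tilde n \<nu>) else 0)"
            using EP[OF \<mu>] \<nu> by (auto simp: a_def)
        qed
        also have "\<dots> = (if \<nu> \<in> R then peval n d f (tilde n \<nu>) else 0)"
          using finR by (simp add: sum.delta)
        finally show ?thesis .
      qed
      have "f - s = 0"
      proof (rule K1[OF gpol])
        show "\<forall>\<nu>\<in>comps n d. peval n d (f - s) (tilde n \<nu>) = 0"
          using sev fz by (auto simp: peval_diff C_def)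
      qed
      then have "f = s" by simp
      also have "s \<in> PS.span (Estar n ` rearr lam)"
        unfolding s_def
        by (intro PS.span_sum PS.span_scale PS.span_base) (auto simp: R_def)
      finally show "f \<in> PS.span (Estar n ` rearr lam)" .
    qed
  qed
qed


end
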